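(* Let $D$ be a rooted hyperbolic digraph with root $o$, constant out-degree and bounded in-degree. Let $g$ be an elliptic self-embedding of $D$ and let $n\in\mathbb{N}$. Then there exists an integer $i\ge1$ such that $g^i$ fixes every vertex of $\mathcal{B}^+_n(o)\cup\mathcal{B}^-_n(o)$.
   Context: A directed path $x_0\ldots x_n$ has edges $x_ix_{i+1}$; $d(x,y)$ is the length of a shortest directed $x$-$y$ path ($\infty$ if none), called an $x$-$y$ geodesic. $D$ is rooted with root $o$ if $d(o,v)<\infty$ for all $v$. $\mathcal{B}^+_k(x)=\{y:d(x,y)\le k\}$, $\mathcal{B}^-_k(x)=\{y:d(y,x)\le k\}$, extended to sets by unions. A geodesic triangle consists of three vertices and for each pair a geodesic between them (in one direction); it is $\delta$-thin if whenever $P,Q,R$ are its sides with the start of $P$ being the start or end of $Q$ and the end of $P$ being the start or end of $R$, $P\subseteq\mathcal{B}^+_\delta(Q)\cup\mathcal{B}^-_\delta(R)$; $D$ is hyperbolic if for some $\delta\ge0$ all geodesic triangles are $\delta$-thin. A self-embedding is an injective $g:V(D)\to V(D)$ with $xy\in E(D)\iff g(x)g(y)\in E(D)$; it is elliptic if $g(F)=F$ for some nonempty finite vertex set $F$. *)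

theory Defs
  imports Main "HOL-Library.Extended_Nat"
begin

definition dwalk :: "'a set \<Rightarrow> ('a \<times> 'a) set \<Rightarrow> 'a list \<Rightarrow> bool" where
  "dwalk V E p \<longleftrightarrow> p \<noteq> [] \<and> set p \<subseteq> V \<and> (\<forall>i. Suc i < length p \<longrightarrow> (p ! i, p ! Suc i) \<in> E)"

definition plen :: "'a list \<Rightarrow> nat" where
  "plen p = length p - 1"

text \<open>Directed distance; infinity if there is no directed path.\<close>
definition ddist :: "'a set \<Rightarrow> ('a \<times> 'a) set \<Rightarrow> 'a \<Rightarrow> 'a \<Rightarrow> enat" where
  "ddist V E x y = (INF p \<in> {p. dwalk V E p \<and> hd p = x \<and> last p = y}. enat (plen p))"

definition geodesic :: "'a set \<Rightarrow> ('a \<times> 'a) set \<Rightarrow> 'a list \<Rightarrow> bool" where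
  "geodesic V E p \<longleftrightarrow> dwalk V E p \<and> enat (plen p) = ddist V E (hd p) (last p)"

definition rooted :: "'a set \<Rightarrow> ('a \<times> 'a) set \<Rightarrow> 'a \<Rightarrow> bool" where
  "rooted V E o' \<longleftrightarrow> o' \<in> V \<and> (\<forall>v\<in>V. ddist V E o' v < \<infinity>)"

definition out_ball :: "'a set \<Rightarrow> ('a \<times> 'a) set \<Rightarrow> nat \<Rightarrow> 'a set \<Rightarrow> 'a set" where
  "out_ball V E k X = {y \<in> V. \<exists>x\<in>X. ddist V E x y \<le> enat k}"

definition in_ball :: "'a set \<Rightarrow> ('a \<times> 'a) set \<Rightarrow> nat \<Rightarrow> 'a set \<Rightarrow> 'a set" where
  "in_ball V E k X = {y \<in> V. \<exists>x\<in>X. ddist V E y x \<le> enat k}"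

definition geod_between :: "'a set \<Rightarrow> ('a \<times> 'a) set \<Rightarrow> 'a \<Rightarrow> 'a \<Rightarrow> 'a list \<Rightarrow> bool" where
  "geod_between V E x y p \<longleftrightarrow> geodesic V E p \<and>
     ((hd p = x \<and> last p = y) \<or> (hd p = y \<and> last p = x))"

definition geod_triangle :: "'a set \<Rightarrow> ('a \<times> 'a) set \<Rightarrow> 'a \<Rightarrow> 'a \<Rightarrow> 'a \<Rightarrow> (nat \<Rightarrow> 'a list) \<Rightarrow> bool" where
  "geod_triangle V E x y z S \<longleftrightarrow> x \<in> V \<and> y \<in> V \<and> z \<in> V \<and>
     geod_between V E x y (S 0) \<and> geod_between V E y z (S 1) \<and> geod_between V E z x (S 2)"

definition thin_triangle :: "'a set \<Rightarrow> ('a \<times> 'a) set \<Rightarrow> nat \<Rightarrow> (nat \<Rightarrow> 'a list) \<Rightarrow> bool" where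
  "thin_triangle V E \<delta> S \<longleftrightarrow>
     (\<forall>a b c. {a, b, c} = {0, 1, 2::nat} \<longrightarrow>
        hd (S a) \<in> {hd (S b), last (S b)} \<longrightarrow> last (S a) \<in> {hd (S c), last (S c)} \<longrightarrow>
        set (S a) \<subseteq> out_ball V E \<delta> (set (S b)) \<union> in_ball V E \<delta> (set (S c)))"

definition hyperbolic :: "'a set \<Rightarrow> ('a \<times> 'a) set \<Rightarrow> bool" where
  "hyperbolic V E \<longleftrightarrow> (\<exists>\<delta>::nat. \<forall>x y z S. geod_triangle V E x y z S \<longrightarrow> thin_triangle V E \<delta> S)"

definition out_nbrs :: "('a \<times> 'a) set \<Rightarrow> 'a \<Rightarrow> 'a set" where
  "out_nbrs E v = {w. (v, w) \<in> E}"

definition in_nbrs :: "('a \<times> 'a) set \<Rightarrow> 'a \<Rightarrow> 'a set" where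
  "in_nbrs E v = {w. (w, v) \<in> E}"

definition const_out_degree :: "'a set \<Rightarrow> ('a \<times> 'a) set \<Rightarrow> bool" where
  "const_out_degree V E \<longleftrightarrow> (\<exists>k::nat. \<forall>v\<in>V. finite (out_nbrs E v) \<and> card (out_nbrs E v) = k)"

definition bounded_in_degree :: "'a set \<Rightarrow> ('a \<times> 'a) set \<Rightarrow> bool" where
  "bounded_in_degree V E \<longleftrightarrow> (\<exists>m::nat. \<forall>v\<in>V. finite (in_nbrs E v) \<and> card (in_nbrs E v) \<le> m)"

definition self_embedding :: "'a set \<Rightarrow> ('a \<times> 'a) set \<Rightarrow> ('a \<Rightarrow> 'a) \<Rightarrow> bool" where
  "self_embedding V E g \<longleftrightarrow> g ` V \<subseteq> V \<and> inj_on g V \<and>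
     (\<forall>x\<in>V. \<forall>y\<in>V. (x, y) \<in> E \<longleftrightarrow> (g x, g y) \<in> E)"

definition elliptic :: "'a set \<Rightarrow> ('a \<Rightarrow> 'a) \<Rightarrow> bool" where
  "elliptic V g \<longleftrightarrow> (\<exists>F. F \<subseteq> V \<and> F \<noteq> {} \<and> finite F \<and> g ` F = F)"

end

theory Submission
  imports Defs "HOL-Library.FuncSet" "HOL-Library.Infinite_Set"
begin

lemma dwalk_single[simp]: "dwalk V E [x] \<longleftrightarrow> x \<in> V"
  by (auto simp: dwalk_def)

lemma dwalk_Cons2[simp]: "dwalk V E (x#y#p) \<longleftrightarrow> x \<in> V \<and> (x,y) \<in> E \<and> dwalk V E (y#p)"
proof
  assume a: "dwalk V E (x#y#p)"
  then have "(x,y) \<in> E" unfolding dwalk_def by (metis length_Cons nth_Cons_0 nth_Cons_Suc zero_less_Suc Suc_less_eq)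
  moreover have "dwalk V E (y#p)" unfolding dwalk_def
  proof (intro conjI allI impI)
    fix i assume "Suc i < length (y#p)"
    then have "Suc (Suc i) < length (x#y#p)" by simp
    then have "((x#y#p) ! Suc i, (x#y#p) ! Suc (Suc i)) \<in> E" using a unfolding dwalk_def by blast
    then show "((y#p) ! i, (y#p) ! Suc i) \<in> E" by simp
  qed (use a in \<open>auto simp: dwalk_def\<close>)
  ultimately show "x \<in> V \<and> (x,y) \<in> E \<and> dwalk V E (y#p)" using a by (auto simp: dwalk_def)
next
  assume a: "x \<in> V \<and> (x,y) \<in> E \<and> dwalk V E (y#p)"
  show "dwalk V E (x#y#p)" unfolding dwalk_def
  proof (intro conjI allI impI)
    show "set (x#y#p) \<subseteq> V" using a by (auto simp: dwalk_def)
  next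
    fix i assume "Suc i < length (x#y#p)"
    then show "((x#y#p) ! i, (x#y#p) ! Suc i) \<in> E" using a
      by (cases i) (auto simp: dwalk_def)
  qed simp
qed

lemma dwalk_nonempty: "dwalk V E p \<Longrightarrow> p \<noteq> []"
  by (simp add: dwalk_def)

lemma dwalk_append:
  "dwalk V E p \<Longrightarrow> dwalk V E q \<Longrightarrow> last p = hd q \<Longrightarrow> dwalk V E (p @ tl q)"
proof (induction p rule: induct_list012)
  case 1 then show ?case by (simp add: dwalk_def)
next
  case (2 x) then show ?case using dwalk_nonempty[of V E q] by (cases q) auto
next
  case (3 x y p)
  then have "dwalk V E ((y#p) @ tl q)" by simp
  then show ?case using 3 by (cases "p @ tl q") auto
qed

lemma ddist_le_iff:
  "ddist V E x y \<le> enat k \<longleftrightarrow> (\<exists>p. dwalk V E p \<and> hd p = x \<and> last p = y \<and> plen p \<le> k)"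
proof
  assume a: "ddist V E x y \<le> enat k"
  let ?S = "(\<lambda>p. enat (plen p)) ` {p. dwalk V E p \<and> hd p = x \<and> last p = y}"
  have d: "ddist V E x y = Inf ?S" by (simp only: ddist_def)
  have "?S \<noteq> {}"
  proof
    assume "?S = {}"
    then have "ddist V E x y = Inf {}" using d by (simp only:)
    then have "ddist V E x y = \<infinity>" by (simp add: top_enat_def)
    then show False using a by simp
  qed
  then obtain z where "z \<in> ?S" by (metis ex_in_conv)
  then have "Inf ?S \<in> ?S" by (rule wellorder_InfI)
  then obtain p where p0: "p \<in> {p. dwalk V E p \<and> hd p = x \<and> last p = y}" and p4: "Inf ?S = enat (plen p)"
    by (rule imageE)
  from p0 have p: "dwalk V E p" "hd p = x" "last p = y" by auto
  have "enat (plen p) \<le> enat k" using a unfolding d p4 .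
  then have "plen p \<le> k" by simp
  then show "\<exists>p. dwalk V E p \<and> hd p = x \<and> last p = y \<and> plen p \<le> k" using p by blast
next
  assume "\<exists>p. dwalk V E p \<and> hd p = x \<and> last p = y \<and> plen p \<le> k"
  then obtain p where p: "dwalk V E p" "hd p = x" "last p = y" "plen p \<le> k" by blast
  then have "ddist V E x y \<le> enat (plen p)" unfolding ddist_def by (intro INF_lower) blast
  then show "ddist V E x y \<le> enat k" using p(4) by (meson enat_ord_simps(1) order_trans)
qed

lemma ddist_trans:
  assumes "ddist V E x y \<le> enat a" "ddist V E y z \<le> enat b"
  shows "ddist V E x z \<le> enat (a + b)"
proof -
  obtain p where p: "dwalk V E p" "hd p = x" "last p = y" "plen p \<le> a" using assms(1) unfolding ddist_le_iff by blast
  obtain q where q: "dwalk V E q" "hd q = y" "last q = z" "plen q \<le> b" using assms(2) unfolding ddist_le_iff by blast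
  have ne: "p \<noteq> []" "q \<noteq> []" using p q dwalk_nonempty by auto
  have "dwalk V E (p @ tl q)" using dwalk_append[OF p(1) q(1)] p(3) q(2) by simp
  moreover have "hd (p @ tl q) = x" using p ne by simp
  moreover have "last (p @ tl q) = z" using p q ne by (cases q) auto
  moreover have "plen (p @ tl q) \<le> a + b" using p q ne unfolding plen_def by (cases q) auto
  ultimately show ?thesis unfolding ddist_le_iff by blast
qed

lemma dwalk_rev: "dwalk V E p \<Longrightarrow> dwalk V (E\<inverse>) (rev p)"
  unfolding dwalk_def
proof (intro conjI allI impI)
  fix i assume a: "p \<noteq> [] \<and> set p \<subseteq> V \<and> (\<forall>i. Suc i < length p \<longrightarrow> (p ! i, p ! Suc i) \<in> E)"
    and i: "Suc i < length (rev p)"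
  define j where "j = length p - Suc (Suc i)"
  have "Suc j < length p" "Suc j = length p - Suc i" using i by (auto simp: j_def)
  then have "(p ! j, p ! Suc j) \<in> E" using a by blast
  then show "(rev p ! i, rev p ! Suc i) \<in> E\<inverse>" using i
    by (simp add: rev_nth j_def \<open>Suc j = length p - Suc i\<close>[symmetric])
qed auto

lemma in_ball_conv: "in_ball V E k X = out_ball V (E\<inverse>) k X"
proof -
  have "ddist V E y x \<le> enat k \<longleftrightarrow> ddist V (E\<inverse>) x y \<le> enat k" for x y
  proof
    assume "ddist V E y x \<le> enat k"
    then obtain p where "dwalk V E p" "hd p = y" "last p = x" "plen p \<le> k" using ddist_le_iff by metis
    then show "ddist V (E\<inverse>) x y \<le> enat k" using ddist_le_iff dwalk_rev dwalk_nonempty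
      by (metis hd_rev last_rev length_rev plen_def)
  next
    assume "ddist V (E\<inverse>) x y \<le> enat k"
    then obtain p where "dwalk V (E\<inverse>) p" "hd p = x" "last p = y" "plen p \<le> k" using ddist_le_iff by metis
    then show "ddist V E y x \<le> enat k" using ddist_le_iff dwalk_rev[of V "E\<inverse>" p] dwalk_nonempty
      by (metis converse_converse hd_rev last_rev length_rev plen_def)
  qed
  then show ?thesis unfolding in_ball_def out_ball_def by auto
qed

lemma dwalk_map:
  assumes "g ` V \<subseteq> V" "\<And>x y. x \<in> V \<Longrightarrow> y \<in> V \<Longrightarrow> (x,y) \<in> E \<Longrightarrow> (g x, g y) \<in> E"
    and "dwalk V E p"
  shows "dwalk V E (map g p)"
  unfolding dwalk_def
proof (intro conjI allI impI)
  have sp: "set p \<subseteq> V" using assms(3) unfolding dwalk_def by blast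
  then show "set (map g p) \<subseteq> V" using assms(1) by auto
  show "map g p \<noteq> []" using assms(3) unfolding dwalk_def by simp
  fix i assume i: "Suc i < length (map g p)"
  then have "(p ! i, p ! Suc i) \<in> E" using assms(3) unfolding dwalk_def by simp
  moreover have "p ! i \<in> V" "p ! Suc i \<in> V" using i sp by (auto dest: nth_mem)
  ultimately show "(map g p ! i, map g p ! Suc i) \<in> E" using assms(2) i by simp
qed

lemma out_ball_map:
  assumes "g ` V \<subseteq> V" "\<And>x y. x \<in> V \<Longrightarrow> y \<in> V \<Longrightarrow> (x,y) \<in> E \<Longrightarrow> (g x, g y) \<in> E"
  shows "g ` out_ball V E k X \<subseteq> out_ball V E k (g ` X)"
proof
  fix z assume "z \<in> g ` out_ball V E k X"
  then obtain y x where y: "z = g y" "y \<in> V" "x \<in> X" "ddist V E x y \<le> enat k"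
    unfolding out_ball_def by auto
  then obtain p where p: "dwalk V E p" "hd p = x" "last p = y" "plen p \<le> k" using ddist_le_iff by metis
  have "dwalk V E (map g p)" using dwalk_map assms p by metis
  moreover have "hd (map g p) = g x" "last (map g p) = g y" using p dwalk_nonempty[OF p(1)]
    by (auto simp: hd_map last_map)
  moreover have "plen (map g p) \<le> k" using p by (simp add: plen_def)
  ultimately have "ddist V E (g x) (g y) \<le> enat k" using ddist_le_iff by metis
  then show "z \<in> out_ball V E k (g ` X)" using y assms(1) unfolding out_ball_def by auto
qed

lemma out_ball_0: "out_ball V E 0 X \<subseteq> X"
proof
  fix y assume "y \<in> out_ball V E 0 X"
  then obtain x where "x \<in> X" "ddist V E x y \<le> enat 0" unfolding out_ball_def by auto
  then obtain p where p: "dwalk V E p" "hd p = x" "last p = y" "plen p \<le> 0" using ddist_le_iff by metis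
  then have "length p = 1" using dwalk_nonempty[OF p(1)] unfolding plen_def by (cases p) auto
  then obtain a where "p = [a]" by (metis One_nat_def length_0_conv length_Suc_conv)
  then show "y \<in> X" using p \<open>x \<in> X\<close> by simp
qed

lemma out_ball_Suc:
  "out_ball V E (Suc k) X \<subseteq> X \<union> out_ball V E k (\<Union>x\<in>X \<inter> V. out_nbrs E x)"
proof
  fix y assume "y \<in> out_ball V E (Suc k) X"
  then obtain x where x: "y \<in> V" "x \<in> X" "ddist V E x y \<le> enat (Suc k)" unfolding out_ball_def by auto
  then obtain p where p: "dwalk V E p" "hd p = x" "last p = y" "plen p \<le> Suc k" using ddist_le_iff by metis
  then obtain q where pq: "p = x # q" using dwalk_nonempty by (cases p) auto
  show "y \<in> X \<union> out_ball V E k (\<Union>x\<in>X \<inter> V. out_nbrs E x)"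
  proof (cases q)
    case Nil then show ?thesis using p pq x by simp
  next
    case (Cons z q')
    then have "x \<in> V" "(x,z) \<in> E" "dwalk V E q" using p pq by auto
    moreover have "hd q = z" "last q = y" "plen q \<le> k" using p pq Cons by (auto simp: plen_def)
    ultimately have "ddist V E z y \<le> enat k" using ddist_le_iff by metis
    then show ?thesis using x \<open>x \<in> V\<close> \<open>(x,z) \<in> E\<close> unfolding out_ball_def out_nbrs_def by auto
  qed
qed

lemma out_ball_finite:
  assumes "\<And>v. v \<in> V \<Longrightarrow> finite (out_nbrs E v)"
  shows "finite X \<Longrightarrow> finite (out_ball V E k X)"
proof (induction k arbitrary: X)
  case 0 then show ?case using out_ball_0 finite_subset by metis
next
  case (Suc k)
  have "finite (\<Union>x\<in>X \<inter> V. out_nbrs E x)" using Suc.prems assms by auto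
  then show ?case using Suc.IH Suc.prems out_ball_Suc finite_subset by (metis finite_UnI)
qed

lemma perm_power:
  assumes "finite U" "g ` U \<subseteq> U" "inj_on g U"
  shows "\<exists>i::nat. i \<ge> 1 \<and> (\<forall>v\<in>U. (g ^^ i) v = v)"
proof -
  have mapsto: "(g ^^ k) v \<in> U" if "v \<in> U" for k v
  proof (induction k)
    case 0 then show ?case using that by simp
  next
    case (Suc k) then show ?case using assms(2) by auto
  qed
  have injk: "inj_on (g ^^ k) U" for k
  proof (induction k)
    case 0 then show ?case by simp
  next
    case (Suc k)
    have sub: "(g ^^ k) ` U \<subseteq> U" using mapsto by (rule image_subsetI)
    have "inj_on g ((g ^^ k) ` U)" by (rule inj_on_subset[OF assms(3) sub])
    then have "inj_on (g \<circ> (g ^^ k)) U" by (rule comp_inj_on[OF Suc.IH])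
    then show ?case unfolding funpow.simps(2) .
  qed
  define f where "f = (\<lambda>k. restrict (g ^^ k) U)"
  have fk: "f k \<in> Pi\<^sub>E U (\<lambda>_. U)" for k
    unfolding f_def restrict_PiE_iff using mapsto by (rule ballI)
  have "range f \<subseteq> Pi\<^sub>E U (\<lambda>_. U)" using fk by (rule image_subsetI)
  moreover have "finite (Pi\<^sub>E U (\<lambda>_. U))" using assms(1) by (intro finite_PiE) auto
  ultimately have "finite (range f)" by (rule finite_subset)
  then have "\<not> inj f" using range_inj_infinite by auto
  then obtain k l where kl: "k \<noteq> l" "f k = f l" unfolding inj_def by auto
  obtain a b where ab: "a < b" "f a = f b"
  proof (cases "k < l")
    case True then show ?thesis using that kl by blast
  next
    case False then have "l < k" using kl(1) by simp
    then show ?thesis using that kl by metis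
  qed
  show ?thesis
  proof (intro exI[of _ "b - a"] conjI ballI)
    show "1 \<le> b - a" using ab by simp
  next
    fix v assume v: "v \<in> U"
    have "b = (b - a) + a" using ab by simp
    then have "(g ^^ b) v = (g ^^ (b - a)) ((g ^^ a) v)" by (metis funpow_add o_apply)
    have "(g ^^ a) ((g ^^ (b - a)) v) = (g ^^ b) v"
      by (metis \<open>b = (b - a) + a\<close> add.commute funpow_add o_apply)
    also have "\<dots> = f b v" unfolding f_def using v by simp
    also have "\<dots> = f a v" using ab by simp
    also have "\<dots> = (g ^^ a) v" unfolding f_def using v by simp
    finally have "(g ^^ a) ((g ^^ (b - a)) v) = (g ^^ a) v" .
    then show "(g ^^ (b - a)) v = v" using injk[of a] mapsto[of _ "b-a"] v
      unfolding inj_on_def by blast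
  qed
qed

theorem lemma3p14:
  fixes V :: "'a set" and E :: "('a \<times> 'a) set" and r :: 'a and g :: "'a \<Rightarrow> 'a" and n :: nat
  assumes "E \<subseteq> V \<times> V"
    and "rooted V E r"
    and "hyperbolic V E"
    and "const_out_degree V E"
    and "bounded_in_degree V E"
    and "self_embedding V E g"
    and "elliptic V g"
  shows "\<exists>i::nat. i \<ge> 1 \<and>
           (\<forall>v \<in> out_ball V E n {r} \<union> in_ball V E n {r}. (g ^^ i) v = v)"
proof -
  obtain F where F: "F \<subseteq> V" "F \<noteq> {}" "finite F" "g ` F = F" using assms(7) unfolding elliptic_def by blast
  obtain f where f: "f \<in> F" using F by blast
  have gV: "g ` V \<subseteq> V" "inj_on g V" using assms(6) unfolding self_embedding_def by auto
  have gE: "\<And>x y. x \<in> V \<Longrightarrow> y \<in> V \<Longrightarrow> (x,y) \<in> E \<Longrightarrow> (g x, g y) \<in> E"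
    using assms(6) unfolding self_embedding_def by auto
  have gE': "\<And>x y. x \<in> V \<Longrightarrow> y \<in> V \<Longrightarrow> (x,y) \<in> E\<inverse> \<Longrightarrow> (g x, g y) \<in> E\<inverse>"
    using gE by auto
  have fin_out: "\<And>v. v \<in> V \<Longrightarrow> finite (out_nbrs E v)"
    using assms(4) unfolding const_out_degree_def by auto
  have fin_in: "\<And>v. v \<in> V \<Longrightarrow> finite (out_nbrs (E\<inverse>) v)"
    using assms(5) unfolding bounded_in_degree_def in_nbrs_def out_nbrs_def by auto
  have "ddist V E r f < \<infinity>" using assms(2) F f unfolding rooted_def by auto
  then obtain L where L: "ddist V E r f = enat L" by (cases "ddist V E r f") auto
  define W where "W = in_ball V E (L + n) F"
  have W_eq: "W = out_ball V (E\<inverse>) (L + n) F" unfolding W_def in_ball_conv ..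
  have gW: "g ` W \<subseteq> W" using out_ball_map[OF gV(1) gE'] F(4) W_eq by metis
  have finW: "finite W" using out_ball_finite[OF fin_in F(3)] W_eq by simp
  have WV: "W \<subseteq> V" unfolding W_def in_ball_def by auto
  define U where "U = W \<union> out_ball V E n W"
  have "g ` out_ball V E n W \<subseteq> out_ball V E n W"
    using out_ball_map[OF gV(1) gE, of n W] gW out_ball_def by (auto simp: out_ball_def) 
  then have gU: "g ` U \<subseteq> U" using gW unfolding U_def by auto
  have finU: "finite U" unfolding U_def using finW out_ball_finite[OF fin_out finW] by simp
  have UV: "U \<subseteq> V" unfolding U_def out_ball_def using WV by auto
  have injU: "inj_on g U" using gV(2) UV inj_on_subset by blast
  have rV: "r \<in> V" using assms(2) unfolding rooted_def by simp
  have rW: "r \<in> W" unfolding W_def in_ball_def using rV f L by (auto intro!: bexI[of _ f])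
  have sub1: "out_ball V E n {r} \<subseteq> U" unfolding U_def out_ball_def using rW by auto
  have sub2: "in_ball V E n {r} \<subseteq> U"
  proof
    fix y assume "y \<in> in_ball V E n {r}"
    then have y: "y \<in> V" "ddist V E y r \<le> enat n" unfolding in_ball_def by auto
    then have "ddist V E y f \<le> enat (n + L)" using ddist_trans L by (metis order_refl)
    then show "y \<in> U" unfolding U_def W_def in_ball_def using y f by (auto simp: add.commute)
  qed
  obtain i where "i \<ge> 1" "\<forall>v\<in>U. (g ^^ i) v = v" using perm_power[OF finU gU injU] by blast
  then show ?thesis using sub1 sub2 by blast
qed

end
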